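(* There exist an environment $E$ and a total preorder $\succeq$ on $\Pi^E$ such that $\succeq\in\mathrm{Ord}_{\mathrm{ONMR}}(E)$ but $\succeq\notin\mathrm{Ord}_{\mathrm{FTR}}(E)$.
   Context: An environment is a tuple $E=(\mathcal S,\mathcal A,\mathcal T,\mathcal I)$ where $\mathcal S,\mathcal A$ are finite nonempty sets, $\mathcal T:\mathcal S\times\mathcal A\to\Delta(\mathcal S)$ and $\mathcal I\in\Delta(\mathcal S)$. A policy is a map $\pi:\mathcal S\to\Delta(\mathcal A)$ (stationary, possibly stochastic); $\Pi^E$ denotes the set of all policies. A trajectory $\xi=(s_0,a_0,s_1,a_1,\dots)\in\Xi:=\mathcal S\times(\mathcal A\times\mathcal S)^\omega$ is generated under $\pi$ by $s_0\sim\mathcal I$, $a_t\sim\pi(s_t)$, $s_{t+1}\sim\mathcal T(s_t,a_t)$; $\mathbb E^\pi_\xi$ denotes expectation under this distribution. An objective-specification formalism $X$ assigns to each environment $E$ a set of objective specifications, each inducing a total preorder $\succeq$ on $\Pi^E$; $\mathrm{Ord}_X(E)$ is the set of total preorders so induced. A specification defining a scalar $J:\Pi^E\to\mathbb R$ induces $\pi_1\succeq\pi_2\iff J(\pi_1)\ge J(\pi_2)$. ONMR: specification $(\mathcal R,f,\gamma)$ with $\mathcal R:\mathcal S\times\mathcal A\times\mathcal S\to\mathbb R$, $f:\mathbb R\to\mathbb R$, $\gamma\in[0,1)$; $J(\pi)=f\big(\mathbb E^\pi_\xi[\sum_{t=0}^\infty\gamma^t\mathcal R(s_t,a_t,s_{t+1})]\big)$.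 FTR: specification $(f)$ with $f:\Xi\to\mathbb R$ Borel measurable (product topology on $\Xi$) such that $\mathbb E^\pi_\xi[f(\xi)]$ is well-defined and finite for every policy; $J(\pi)=\mathbb E^\pi_\xi[f(\xi)]$. *)

theory Defs
  imports "HOL-Probability.Probability"
begin

record ('s, 'a) env =
  St   :: "'s set"
  Ac   :: "'a set"
  Tr   :: "'s \<Rightarrow> 'a \<Rightarrow> 's pmf"
  Init :: "'s pmf"

definition valid_env :: "('s, 'a) env \<Rightarrow> bool" where
  "valid_env E \<longleftrightarrow> finite (St E) \<and> St E \<noteq> {} \<and> finite (Ac E) \<and> Ac E \<noteq> {}
     \<and> set_pmf (Init E) \<subseteq> St E
     \<and> (\<forall>s\<in>St E. \<forall>a\<in>Ac E. set_pmf (Tr E s a) \<subseteq> St E)"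

definition policies :: "('s, 'a) env \<Rightarrow> ('s \<Rightarrow> 'a pmf) set" where
  "policies E = {\<pi>. (\<forall>s\<in>St E. set_pmf (\<pi> s) \<subseteq> Ac E) \<and> (\<forall>s. s \<notin> St E \<longrightarrow> \<pi> s = undefined)}"

(* Trajectories xi = (s0,a0,s1,a1,...) are represented as streams of pairs (s_t, a_t),
   with the product sigma-algebra of the discrete spaces (= Borel sets of the product topology). *)
definition traj_space :: "('s, 'a) env \<Rightarrow> ('s \<times> 'a) stream measure" where
  "traj_space E = stream_space (count_space (St E \<times> Ac E))"

fun pp_from :: "('s, 'a) env \<Rightarrow> ('s \<Rightarrow> 'a pmf) \<Rightarrow> ('s \<times> 'a) list \<Rightarrow> ennreal" where
  "pp_from E \<pi> [] = 1"
| "pp_from E \<pi> [(s, a)] = ennreal (pmf (\<pi> s) a)"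
| "pp_from E \<pi> ((s, a) # (s', a') # rest) =
     ennreal (pmf (\<pi> s) a) * ennreal (pmf (Tr E s a) s') * pp_from E \<pi> ((s', a') # rest)"

fun path_prob :: "('s, 'a) env \<Rightarrow> ('s \<Rightarrow> 'a pmf) \<Rightarrow> ('s \<times> 'a) list \<Rightarrow> ennreal" where
  "path_prob E \<pi> [] = 1"
| "path_prob E \<pi> ((s, a) # rest) = ennreal (pmf (Init E) s) * pp_from E \<pi> ((s, a) # rest)"

definition traj_measure :: "('s, 'a) env \<Rightarrow> ('s \<Rightarrow> 'a pmf) \<Rightarrow> ('s \<times> 'a) stream measure" where
  "traj_measure E \<pi> = (THE M. sets M = sets (traj_space E) \<and> prob_space M \<and>
      (\<forall>xs. emeasure M {\<omega> \<in> space (traj_space E). stake (length xs) \<omega> = xs} = path_prob E \<pi> xs))"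

definition ord_of :: "('s, 'a) env \<Rightarrow> (('s \<Rightarrow> 'a pmf) \<Rightarrow> real) \<Rightarrow> ('s \<Rightarrow> 'a pmf) rel" where
  "ord_of E J = {(\<pi>1, \<pi>2). \<pi>1 \<in> policies E \<and> \<pi>2 \<in> policies E \<and> J \<pi>1 \<ge> J \<pi>2}"

definition disc_return :: "('s \<Rightarrow> 'a \<Rightarrow> 's \<Rightarrow> real) \<Rightarrow> real \<Rightarrow> ('s \<times> 'a) stream \<Rightarrow> real" where
  "disc_return R \<gamma> \<omega> =
     (\<Sum>t. \<gamma> ^ t * R (fst (\<omega> !! t)) (snd (\<omega> !! t)) (fst (\<omega> !! Suc t)))"

definition Ord_ONMR :: "('s, 'a) env \<Rightarrow> ('s \<Rightarrow> 'a pmf) rel set" where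
  "Ord_ONMR E = {ord_of E (\<lambda>\<pi>. f (\<integral>\<omega>. disc_return R \<gamma> \<omega> \<partial>traj_measure E \<pi>))
                  | (R :: 's \<Rightarrow> 'a \<Rightarrow> 's \<Rightarrow> real) (f :: real \<Rightarrow> real) (\<gamma> :: real).
                  0 \<le> \<gamma> \<and> \<gamma> < 1}"

(* FTR: J(pi) = E^pi[f(xi)], f Borel measurable with finite, well-defined expectation
   under every policy (i.e. Lebesgue integrable). *)
definition Ord_FTR :: "('s, 'a) env \<Rightarrow> ('s \<Rightarrow> 'a pmf) rel set" where
  "Ord_FTR E = {ord_of E (\<lambda>\<pi>. \<integral>\<omega>. f \<omega> \<partial>traj_measure E \<pi>)
                 | f. f \<in> borel_measurable (traj_space E) \<and>
                      (\<forall>\<pi>\<in>policies E. integrable (traj_measure E \<pi>) f)}"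

definition total_preorder_on :: "'x set \<Rightarrow> 'x rel \<Rightarrow> bool" where
  "total_preorder_on A r \<longleftrightarrow> preorder_on A r \<and> total_on A r"

end

theory Submission
  imports Defs
begin

lemma sstart_stake:
  "\<omega> \<in> streams S \<Longrightarrow> (\<omega> \<in> sstart S xs) = (stake (length xs) \<omega> = xs)"
proof (induction xs arbitrary: \<omega>)
  case Nil then show ?case by simp
next
  case (Cons x xs)
  have "stl \<omega> \<in> streams S" using Cons.prems streams_stl by blast
  then show ?case using Cons.IH[of "stl \<omega>"] by (cases \<omega>) auto
qed

lemma traj_unique:
  assumes fin: "finite (St E)" "finite (Ac E)"
  assumes M: "sets M = sets (traj_space E)" "prob_space M"
    "\<And>xs. emeasure M {\<omega> \<in> space (traj_space E). stake (length xs) \<omega> = xs} = path_prob E \<pi> xs"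
  assumes N: "sets N = sets (traj_space E)" "prob_space N"
    "\<And>xs. emeasure N {\<omega> \<in> space (traj_space E). stake (length xs) \<omega> = xs} = path_prob E \<pi> xs"
  shows "M = N"
proof -
  let ?S = "St E \<times> Ac E"
  have cS: "countable ?S" using fin by (simp add: countable_finite)
  have G: "sstart ?S ` lists ?S \<union> {{}} \<subseteq> Pow (streams ?S)"
    by (auto dest: sstart_in_streams del: in_listsD)
  have sets_eq: "sets (traj_space E) = sigma_sets (streams ?S) (sstart ?S ` lists ?S \<union> {{}})"
    unfolding traj_space_def using sets_stream_space_sstart[OF cS] G
    by (simp add: sets_measure_of)
  have cyl: "sstart ?S xs = {\<omega> \<in> space (traj_space E). stake (length xs) \<omega> = xs}"
    if "xs \<in> lists ?S" for xs
    using sstart_in_streams[OF that] sstart_stake[of _ ?S xs]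
    by (auto simp: traj_space_def space_stream_space)
  show ?thesis
  proof (rule measure_eqI_generator_eq[OF Int_stable_sstart G _ _ _ _ _])
    fix X assume "X \<in> sstart ?S ` lists ?S \<union> {{}}"
    then show "emeasure M X = emeasure N X"
      using cyl M(3) N(3) by auto
  next
    show "sets M = sigma_sets (streams ?S) (sstart ?S ` lists ?S \<union> {{}})" using M(1) sets_eq by simp
    show "sets N = sigma_sets (streams ?S) (sstart ?S ` lists ?S \<union> {{}})" using N(1) sets_eq by simp
    show "range (\<lambda>_. streams ?S) \<subseteq> sstart ?S ` lists ?S \<union> {{}}"
      by (auto intro: image_eqI[where x="[]"])
    show "(\<Union>i. streams ?S) = streams ?S" by simp
    show "\<And>i. emeasure M (streams ?S) \<noteq> \<infinity>"
      using prob_space.emeasure_space_1[OF M(2)] sets_eq_imp_space_eq[OF M(1)]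
      by (simp add: traj_space_def space_stream_space)
  qed
qed

lemma traj_measure_eq:
  assumes fin: "finite (St E)" "finite (Ac E)"
  assumes M: "sets M = sets (traj_space E)" "prob_space M"
    "\<And>xs. emeasure M {\<omega> \<in> space (traj_space E). stake (length xs) \<omega> = xs} = path_prob E \<pi> xs"
  shows "traj_measure E \<pi> = M"
  unfolding traj_measure_def
  apply (rule the_equality)
  using M apply blast
  subgoal for N
    using traj_unique[OF fin, of N \<pi> M] M by blast
  done

definition E0 :: "(nat, nat) env" where
  "E0 = \<lparr>St = {0,1}, Ac = {0,1}, Tr = (\<lambda>_ _. return_pmf 1), Init = return_pmf 0\<rparr>"

definition qp :: "real \<Rightarrow> nat pmf" where
  "qp p = map_pmf (\<lambda>b. if b then 0 else 1) (bernoulli_pmf p)"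

definition pol :: "real \<Rightarrow> nat \<Rightarrow> nat pmf" where
  "pol p = (\<lambda>s. if s = 0 then qp p else if s = 1 then return_pmf 0 else undefined)"

definition gs :: "nat \<Rightarrow> (nat \<times> nat) stream" where
  "gs b = (0, min b 1) ## sconst (1, 0)"

definition Mp :: "real \<Rightarrow> (nat \<times> nat) stream measure" where
  "Mp p = distr (measure_pmf (qp p)) (traj_space E0) gs"

lemma E0_simps[simp]: "Tr E0 s a = return_pmf 1" "Init E0 = return_pmf 0"
  "St E0 = {0,1}" "Ac E0 = {0,1}"
  by (simp_all add: E0_def)

lemma pol_simps[simp]: "pol p 0 = qp p" "pol p 1 = return_pmf 0" "pol p (Suc 0) = return_pmf 0"
  by (simp_all add: pol_def)

lemma set_qp: "set_pmf (qp p) \<subseteq> {0,1}"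
  unfolding qp_def by auto

lemma pmf_qp0: "0 \<le> p \<Longrightarrow> p \<le> 1 \<Longrightarrow> pmf (qp p) 0 = p"
proof -
  assume "0 \<le> p" "p \<le> 1"
  have "(\<lambda>b. if b then 0 else 1::nat) -` {0} = {True}" by (auto split: if_splits)
  then show ?thesis using \<open>0 \<le> p\<close> \<open>p \<le> 1\<close>
    unfolding qp_def by (simp add: pmf_map measure_pmf_single)
qed

lemma pmf_qp1: "0 \<le> p \<Longrightarrow> p \<le> 1 \<Longrightarrow> pmf (qp p) 1 = 1 - p"
proof -
  assume "0 \<le> p" "p \<le> 1"
  have "(\<lambda>b. if b then 0 else 1::nat) -` {1} = {False}" by (auto split: if_splits)
  then show ?thesis using \<open>0 \<le> p\<close> \<open>p \<le> 1\<close>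
    unfolding qp_def by (simp add: pmf_map measure_pmf_single)
qed

lemma stake_sconst: "stake n (sconst x) = replicate n x"
  by (induction n) (simp_all del: stake_siterate)

lemma stake_lists: "\<omega> \<in> streams S \<Longrightarrow> stake n \<omega> \<in> lists S"
  by (induction n arbitrary: \<omega>) (auto intro: streams_stl streams_shd)

lemma cyl_sets:
  assumes fin: "finite (St E)" "finite (Ac E)"
  shows "{\<omega> \<in> space (traj_space E). stake (length xs) \<omega> = xs} \<in> sets (traj_space E)"
proof -
  let ?S = "St E \<times> Ac E"
  have cS: "countable ?S" using fin by (simp add: countable_finite)
  have G: "sstart ?S ` lists ?S \<union> {{}} \<subseteq> Pow (streams ?S)"
    by (auto dest: sstart_in_streams del: in_listsD)
  have sets_eq: "sets (traj_space E) = sigma_sets (streams ?S) (sstart ?S ` lists ?S \<union> {{}})"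
    unfolding traj_space_def using sets_stream_space_sstart[OF cS] G
    by (simp add: sets_measure_of)
  show ?thesis
  proof (cases "xs \<in> lists ?S")
    case True
    have "sstart ?S xs = {\<omega> \<in> space (traj_space E). stake (length xs) \<omega> = xs}"
      using sstart_in_streams[OF True] sstart_stake[of _ ?S xs]
      by (auto simp: traj_space_def space_stream_space)
    moreover have "sstart ?S xs \<in> sets (traj_space E)"
      unfolding sets_eq using True by (auto intro: sigma_sets.Basic)
    ultimately show ?thesis by simp
  next
    case False
    have "{\<omega> \<in> space (traj_space E). stake (length xs) \<omega> = xs} = {}"
    proof safe
      fix \<omega> assume "\<omega> \<in> space (traj_space E)" "stake (length xs) \<omega> = xs"
      then have "\<omega> \<in> streams ?S" by (simp add: traj_space_def space_stream_space)
      then have "stake (length xs) \<omega> \<in> lists ?S"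
        by (rule stake_lists)
      then show "\<omega> \<in> {}" using False \<open>stake (length xs) \<omega> = xs\<close> by simp
    qed
    then show ?thesis by (metis sets.empty_sets)
  qed
qed

lemma gs_space: "gs b \<in> space (traj_space E0)"
  unfolding gs_def traj_space_def E0_def space_stream_space
  by (auto intro!: streams_Stream[THEN iffD2] sconst_streams)

lemma pp_tail:
  "pp_from E0 (pol p) ((1,b)#rest) = (if (1,b)#rest = replicate (Suc (length rest)) (1,0) then 1 else 0)"
proof (induction rest arbitrary: b)
  case Nil then show ?case by (simp add: indicator_def)
next
  case (Cons x rest)
  obtain s' a' where x: "x = (s',a')" by (cases x)
  show ?case
  proof (cases "s' = 1")
    case True
    then show ?thesis using Cons[of a'] by (simp add: x indicator_def)
  next
    case False
    then show ?thesis by (simp add: x indicator_def)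
  qed
qed

lemma cyl_Mp:
  "emeasure (Mp p) {\<omega> \<in> space (traj_space E0). stake (length xs) \<omega> = xs} = path_prob E0 (pol p) xs"
proof -
  have meas: "gs \<in> measurable (measure_pmf (qp p)) (traj_space E0)"
    using gs_space by (simp add: measurable_pmf_measure1)
  have "emeasure (Mp p) {\<omega> \<in> space (traj_space E0). stake (length xs) \<omega> = xs}
     = emeasure (measure_pmf (qp p)) {b. stake (length xs) (gs b) = xs}"
    unfolding Mp_def
    by (subst emeasure_distr[OF meas cyl_sets]) (auto simp: gs_space)
  also have "\<dots> = path_prob E0 (pol p) xs"
  proof (cases xs)
    case Nil
    then show ?thesis using measure_pmf.emeasure_space_1[of "qp p"] by simp
  next
    case (Cons x rest)
    obtain s a where x: "x = (s, a)" by (cases x)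
    have key: "emeasure (measure_pmf (qp p)) {b. min b 1 = a} = pmf (qp p) a"
    proof -
      have "{b. min b 1 = a} \<inter> set_pmf (qp p) = {a} \<inter> set_pmf (qp p)"
        using set_qp[of p] by auto
      then show ?thesis
        by (metis emeasure_Int_set_pmf emeasure_pmf_single)
    qed
    show ?thesis
    proof (cases "s = 0")
      case False
      then show ?thesis by (simp add: Cons x gs_def)
    next
      case s: True
      show ?thesis
      proof (cases rest)
        case Nil
        then show ?thesis using key by (simp add: Cons x s gs_def)
      next
        case (Cons y r)
        obtain s' a' where y: "y = (s', a')" by (cases y)
        have set_eq: "{b. stake (length xs) (gs b) = xs} =
           (if (s', a') # r = replicate (Suc (length r)) (1, 0) then {b. min b 1 = a} else {})"
          by (auto simp: \<open>xs = x # rest\<close> Cons x y s gs_def stake_sconst simp del: stake_siterate)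
        show ?thesis
        proof (cases "s' = 1")
          case True
          then show ?thesis unfolding set_eq using key pp_tail[of p a' r]
            by (simp add: \<open>xs = x # rest\<close> Cons x y s)
        next
          case False
          then show ?thesis unfolding set_eq by (simp add: \<open>xs = x # rest\<close> Cons x y s)
        qed
      qed
    qed
  qed
  finally show ?thesis .
qed



lemma traj_E0: "traj_measure E0 (pol p) = Mp p"
proof (rule traj_measure_eq)
  show "finite (St E0)" "finite (Ac E0)" by simp_all
  have meas: "gs \<in> measurable (measure_pmf (qp p)) (traj_space E0)"
    using gs_space by (simp add: measurable_pmf_measure1)
  show "sets (Mp p) = sets (traj_space E0)" by (simp add: Mp_def)
  show "prob_space (Mp p)" unfolding Mp_def by (rule measure_pmf.prob_space_distr[OF meas])
  show "\<And>xs. emeasure (Mp p) {\<omega> \<in> space (traj_space E0). stake (length xs) \<omega> = xs} =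
       path_prob E0 (pol p) xs" by (rule cyl_Mp)
qed

lemma integral_Mp:
  assumes "F \<in> borel_measurable (traj_space E0)" "0 \<le> p" "p \<le> 1"
  shows "(\<integral>\<omega>. F \<omega> \<partial>traj_measure E0 (pol p)) = F (gs 0) * p + F (gs 1) * (1 - p)"
proof -
  have meas: "gs \<in> measurable (measure_pmf (qp p)) (traj_space E0)"
    using gs_space by (simp add: measurable_pmf_measure1)
  have "(\<integral>\<omega>. F \<omega> \<partial>traj_measure E0 (pol p)) = (\<integral>b. F (gs b) \<partial>measure_pmf (qp p))"
    unfolding traj_E0 Mp_def by (rule integral_distr[OF meas assms(1)])
  also have "\<dots> = (\<Sum>b\<in>{0,1}. F (gs b) * pmf (qp p) b)"
    by (rule integral_measure_pmf_real) (use set_qp[of p] in auto)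
  also have "\<dots> = F (gs 0) * p + F (gs 1) * (1 - p)"
    using pmf_qp0[OF assms(2,3)] pmf_qp1[OF assms(2,3)] by simp
  finally show ?thesis .
qed

definition R0 :: "nat \<Rightarrow> nat \<Rightarrow> nat \<Rightarrow> real" where
  "R0 s a s' = (if s = 0 \<and> a = 0 then 1 else 0)"

lemma disc_R0: "disc_return R0 0 = (\<lambda>\<omega>. if \<omega> !! 0 = (0, 0) then 1 else 0)"
proof
  fix \<omega> :: "(nat \<times> nat) stream"
  have "(\<lambda>t. (0::real) ^ t * R0 (fst (\<omega> !! t)) (snd (\<omega> !! t)) (fst (\<omega> !! Suc t))) =
        (\<lambda>t. if t = 0 then R0 (fst (\<omega> !! t)) (snd (\<omega> !! t)) (fst (\<omega> !! Suc t)) else 0)"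
    by (auto simp: fun_eq_iff)
  then have "disc_return R0 0 \<omega> = R0 (fst (\<omega> !! 0)) (snd (\<omega> !! 0)) (fst (\<omega> !! Suc 0))"
    unfolding disc_return_def using sums_single[of 0 "\<lambda>t. R0 (fst (\<omega> !! t)) (snd (\<omega> !! t)) (fst (\<omega> !! Suc t))"]
    by (simp add: sums_iff)
  then show "disc_return R0 0 \<omega> = (if \<omega> !! 0 = (0, 0) then 1 else 0)"
    by (cases "\<omega> !! 0") (simp add: R0_def)
qed

lemma disc_R0_meas: "disc_return R0 0 \<in> borel_measurable (traj_space E0)"
  unfolding disc_R0 traj_space_def by measurable

lemma pol_in: "pol p \<in> policies E0"
  unfolding policies_def pol_def using set_qp[of p] by auto

theorem mainTheorem14:
  shows "\<exists>(E :: (nat, nat) env) r. valid_env E \<and> total_preorder_on (policies E) r \<and>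
           r \<in> Ord_ONMR E \<and> r \<notin> Ord_FTR E"
proof -
  define J where "J = (\<lambda>\<pi>. (\<lambda>x::real. - \<bar>x - 1/2\<bar>) (\<integral>\<omega>. disc_return R0 0 \<omega> \<partial>traj_measure E0 \<pi>))"
  define r where "r = ord_of E0 J"
  have JE: "J (pol p) = - \<bar>p - 1/2\<bar>" if "0 \<le> p" "p \<le> 1" for p
    unfolding J_def using integral_Mp[OF disc_R0_meas that]
    by (simp add: disc_R0 gs_def)
  have valid: "valid_env E0" unfolding valid_env_def by auto
  have tp: "total_preorder_on (policies E0) r"
    unfolding r_def total_preorder_on_def preorder_on_def refl_on_def trans_on_def total_on_def ord_of_def
    by auto
  have onmr: "r \<in> Ord_ONMR E0"
    unfolding Ord_ONMR_def r_def J_def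
    apply (rule CollectI)
    apply (rule exI[of _ R0], rule exI[of _ "\<lambda>x::real. - \<bar>x - 1/2\<bar>"], rule exI[of _ 0])
    by simp
  have nftr: "r \<notin> Ord_FTR E0"
  proof
    assume "r \<in> Ord_FTR E0"
    then obtain F where F: "F \<in> borel_measurable (traj_space E0)"
      and req: "r = ord_of E0 (\<lambda>\<pi>. \<integral>\<omega>. F \<omega> \<partial>traj_measure E0 \<pi>)"
      unfolding Ord_FTR_def by blast
    have r1: "(pol 0, pol 1) \<in> r" "(pol 1, pol 0) \<in> r" "(pol 0, pol (1/2)) \<notin> r"
      unfolding r_def ord_of_def using pol_in JE by auto
    then show False unfolding req ord_of_def
      using integral_Mp[OF F, of 0] integral_Mp[OF F, of 1] integral_Mp[OF F, of "1/2"] pol_in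
      by auto
  qed
  show ?thesis using valid tp onmr nftr by blast
qed

end
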